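(* For every balanced word $X$, the reduction algorithm applied to $X$ terminates after finitely many steps.
   Context: Words are finite products of the letters $L,R$; a subword is a contiguous block of letters. A word is balanced if it contains equally many $L$'s and $R$'s. A word is prime if it is nonempty, balanced, and not a product of two nonempty balanced words. For a balanced word $W=a_1\cdots a_n$, $e_k(W)=\sum_{i=1}^k\overline{a_i}$ with $\overline{R}=1$, $\overline{L}=-1$. A prime $P$ of length $n$ is an upper prime if $e_k(P)>0$ for $1\le k\le n-1$, and a lower prime if $e_k(P)<0$ for $1\le k\le n-1$. A word is reduced if it contains no subword $UD$ with $U$ an upper prime and $D$ a lower prime. The reduction algorithm: set $X_0=X$. For $i\ge 0$, if $X_i$ is reduced, stop and output $X_i$; otherwise take the leftmost occurrence of a subword of the form $UD$ ($U$ upper prime, $D$ lower prime), write $X_i=W_1UDW_2$ accordingly, and set $X_{i+1}=W_1DUW_2$. *)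

theory Defs
  imports Main
begin

datatype letter = L | R

type_synonym word = "letter list"

definition lval :: "letter \<Rightarrow> int" where
  "lval a = (if a = R then 1 else -1)"

definition e :: "nat \<Rightarrow> word \<Rightarrow> int" where
  "e k W = (\<Sum>a\<leftarrow>take k W. lval a)"

definition balanced :: "word \<Rightarrow> bool" where
  "balanced W \<longleftrightarrow> length (filter (\<lambda>a. a = L) W) = length (filter (\<lambda>a. a = R) W)"

definition prime_word :: "word \<Rightarrow> bool" where
  "prime_word W \<longleftrightarrow> W \<noteq> [] \<and> balanced W \<and>
     \<not> (\<exists>U V. U \<noteq> [] \<and> V \<noteq> [] \<and> balanced U \<and> balanced V \<and> W = U @ V)"

definition upper_prime :: "word \<Rightarrow> bool" where
  "upper_prime P \<longleftrightarrow> prime_word P \<and> (\<forall>k. 1 \<le> k \<and> k \<le> length P - 1 \<longrightarrow> e k P > 0)"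

definition lower_prime :: "word \<Rightarrow> bool" where
  "lower_prime P \<longleftrightarrow> prime_word P \<and> (\<forall>k. 1 \<le> k \<and> k \<le> length P - 1 \<longrightarrow> e k P < 0)"

definition reduced :: "word \<Rightarrow> bool" where
  "reduced X \<longleftrightarrow> \<not> (\<exists>W1 U D W2. X = W1 @ U @ D @ W2 \<and> upper_prime U \<and> lower_prime D)"

definition red_step :: "word \<Rightarrow> word \<Rightarrow> bool" where
  "red_step X Y \<longleftrightarrow> \<not> reduced X \<and>
     (\<exists>W1 U D W2. X = W1 @ U @ D @ W2 \<and> upper_prime U \<and> lower_prime D \<and>
        (\<forall>W1' U' D' W2'. X = W1' @ U' @ D' @ W2' \<and> upper_prime U' \<and> lower_prime D'
            \<longrightarrow> length W1 \<le> length W1') \<and>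
        Y = W1 @ D @ U @ W2)"

end

theory Submission
  imports Defs
begin

fun bv :: "word \<Rightarrow> nat" where
  "bv [] = 0"
| "bv (a # w) = (if a = R then 2 ^ length w else 0) + bv w"

lemma bv_lt: "bv w < 2 ^ length w"
  by (induction w) auto

lemma bv_append: "bv (xs @ ys) = bv xs * 2 ^ length ys + bv ys"
  by (induction xs) (auto simp: power_add algebra_simps)

lemma len2: assumes "prime_word P" shows "length P \<ge> 2"
proof (rule ccontr)
  assume "\<not> length P \<ge> 2"
  moreover have "P \<noteq> []" "balanced P" using assms by (auto simp: prime_word_def)
  ultimately have "length P = 1" by (cases P) (auto simp: not_le)
  then obtain a where "P = [a]" by (auto simp: length_Suc_conv)
  with \<open>balanced P\<close> show False by (cases a) (auto simp: balanced_def)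
qed

lemma hd_val: assumes "length U \<ge> 2" shows "\<exists>a U'. U = a # U' \<and> e 1 U = lval a"
  using assms by (cases U) (auto simp: e_def)

lemma upper_hd: assumes "upper_prime U" shows "\<exists>U'. U = R # U'"
proof -
  have l: "length U \<ge> 2" using assms len2 upper_prime_def by blast
  then have "e 1 U > 0" using assms by (auto simp: upper_prime_def)
  moreover obtain a U' where "U = a # U'" "e 1 U = lval a" using hd_val l by blast
  ultimately show ?thesis by (cases a) (auto simp: lval_def)
qed

lemma lower_hd: assumes "lower_prime U" shows "\<exists>U'. U = L # U'"
proof -
  have l: "length U \<ge> 2" using assms len2 lower_prime_def by blast
  then have "e 1 U < 0" using assms by (auto simp: lower_prime_def)
  moreover obtain a U' where "U = a # U'" "e 1 U = lval a" using hd_val l by blast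
  ultimately show ?thesis by (cases a) (auto simp: lval_def)
qed

lemma swap_lt: assumes "upper_prime U" "lower_prime D"
  shows "bv (D @ U) < bv (U @ D)"
proof -
  obtain U' where U: "U = R # U'" using upper_hd assms by blast
  obtain D' where D: "D = L # D'" using lower_hd assms by blast
  have "bv (D @ U) = bv (D' @ U)" using D by simp
  also have "\<dots> < 2 ^ length (D' @ U)" by (rule bv_lt)
  also have "\<dots> \<le> bv (U @ D)" using U D by (simp add: add.commute)
  finally show ?thesis .
qed

lemma step_lt: assumes "red_step X Y" shows "bv Y < bv X"
proof -
  obtain W1 U D W2 where X: "X = W1 @ U @ D @ W2" and u: "upper_prime U" and d: "lower_prime D"
    and Y: "Y = W1 @ D @ U @ W2" using assms unfolding red_step_def by blast
  have lt: "bv (D @ U) < bv (U @ D)" using swap_lt u d .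
  have "bv Y = (bv W1 * 2 ^ length (D @ U) + bv (D @ U)) * 2 ^ length W2 + bv W2"
    using Y by (simp only: bv_append append_assoc[symmetric]) (simp add: bv_append algebra_simps power_add)
  also have "\<dots> < (bv W1 * 2 ^ length (U @ D) + bv (U @ D)) * 2 ^ length W2 + bv W2"
    using lt by (simp add: add.commute)
  also have "\<dots> = bv X" using X by (simp only: bv_append append_assoc[symmetric]) (simp add: bv_append algebra_simps power_add)
  finally show ?thesis .
qed

theorem proposition6p7:
  fixes X :: word
  assumes "balanced X"
  shows "\<not> (\<exists>f :: nat \<Rightarrow> word. f 0 = X \<and> (\<forall>i. red_step (f i) (f (Suc i))))"
proof
  assume "\<exists>f :: nat \<Rightarrow> word. f 0 = X \<and> (\<forall>i. red_step (f i) (f (Suc i)))"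
  then obtain f :: "nat \<Rightarrow> word" where f: "\<forall>i. red_step (f i) (f (Suc i))" by blast
  have mono: "\<forall>i. bv (f (Suc i)) < bv (f i)" using f step_lt by blast
  have h: "bv (f i) + i \<le> bv (f 0)" for i
  proof (induction i)
    case 0 then show ?case by simp
  next
    case (Suc i)
    have "bv (f (Suc i)) < bv (f i)" using mono by blast
    then show ?case using Suc.IH by simp
  qed
  from h[of "Suc (bv (f 0))"] show False by simp
qed

end
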